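(* For every $\alpha\in(0,1)$ and every set of $m$ statistical queries $\mathcal{Q}$ over a universe $U$ of size $N$ with query matrix $Q\in[0,1]^{m\times N}$, there exists \[ s=\frac5\alpha\cdot\mathrm{hdisc}^*\left(Q,\frac{32\ln m}{\alpha^2}\right)=O\left(\frac{\log m}{\alpha}\cdot\mathrm{hdisc}^*\left(Q,\frac1{\alpha^2}\right)\right) \] such that for every dataset $x\in U^*$ whose rows are all distinct, there exists a dataset $y\in U^*$ of size at most $s$ such that $\|\mathcal{Q}(x)-\mathcal{Q}(y)\|_\infty\le\frac98\alpha$.
   Context: A statistical query is $q:U\to\mathbb{R}$ with $q(x)=\frac1{|x|}\sum_i q(x_i)$ for a dataset $x\in U^*$ (a finite sequence over $U$); $\mathcal{Q}(x)=(q_1(x),\ldots,q_m(x))$; the query matrix has $i$-th row $(q_i(u))_{u\in U}$. For an $m\times N$ matrix $Q$, $Q^*$ is the $(m+1)\times N$ matrix obtained by appending the all-ones row, $Q^*_S$ its submatrix of columns in $S$, and $\mathrm{hdisc}^*(Q,w)=\max_{S\subseteq[N],|S|\le w}\min_{z\in\{\pm1\}^S}\|Q^*_Sz\|_\infty$. *)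

theory Defs
  imports Complex_Main "HOL-Library.FuncSet"
begin

text \<open>The universe U is a finite type 'u (so N = CARD('u)); a family of m statistical
  queries is Q :: nat => 'u => real, the i-th query being Q i for i < m.
  Row i of the query matrix is (Q i u) for u in U.\<close>

definition query_answer :: "('u \<Rightarrow> real) \<Rightarrow> 'u list \<Rightarrow> real" where
  "query_answer q x = sum_list (map q x) / real (length x)"

definition qstar :: "(nat \<Rightarrow> 'u \<Rightarrow> real) \<Rightarrow> nat \<Rightarrow> nat \<Rightarrow> 'u \<Rightarrow> real" where
  "qstar Q m i u = (if i < m then Q i u else 1)"

definition disc_val :: "(nat \<Rightarrow> 'u \<Rightarrow> real) \<Rightarrow> nat \<Rightarrow> 'u set \<Rightarrow> ('u \<Rightarrow> real) \<Rightarrow> real" where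
  "disc_val Q m S z = Max ((\<lambda>i. \<bar>\<Sum>u\<in>S. qstar Q m i u * z u\<bar>) ` {..m})"

definition hdisc_star :: "(nat \<Rightarrow> 'u::finite \<Rightarrow> real) \<Rightarrow> nat \<Rightarrow> real \<Rightarrow> real" where
  "hdisc_star Q m w =
     Max ((\<lambda>S. Min ((\<lambda>z. disc_val Q m S z) ` (S \<rightarrow>\<^sub>E {-1, 1}))) ` {S. real (card S) \<le> w})"

end

theory Submission
  imports Defs "HOL-Probability.Probability"
begin


definition csz :: "('u::finite \<Rightarrow> nat) \<Rightarrow> nat" where
  "csz c = (\<Sum>u\<in>UNIV. c u)"
definition cS :: "('u::finite \<Rightarrow> real) \<Rightarrow> ('u \<Rightarrow> nat) \<Rightarrow> real" where
  "cS q c = (\<Sum>u\<in>UNIV. real (c u) * q u)"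
definition cans :: "('u::finite \<Rightarrow> real) \<Rightarrow> ('u \<Rightarrow> nat) \<Rightarrow> real" where
  "cans q c = cS q c / real (csz c)"

lemma length_count: "length (y::'u::finite list) = csz (count_list y)"
  unfolding csz_def by (rule sum_count_set[symmetric]) auto

lemma sum_count: "sum_list (map q (y::'u::finite list)) = cS q (count_list y)"
  unfolding cS_def
proof (induction y)
  case Nil then show ?case by simp
next
  case (Cons a y)
  have "(\<Sum>u\<in>UNIV. real (count_list (a # y) u) * q u)
      = (\<Sum>u\<in>UNIV. real (count_list y u) * q u + (if a = u then q u else 0))"
    by (intro sum.cong) (auto simp: algebra_simps)
  also have "\<dots> = (\<Sum>u\<in>UNIV. real (count_list y u) * q u) + q a"
    by (simp add: sum.distrib)
  finally show ?case using Cons by simp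
qed

lemma qa_count: "query_answer q (y::'u::finite list) = cans q (count_list y)"
  unfolding query_answer_def cans_def using length_count sum_count by metis

lemma count_concat_rep:
  "distinct xs \<Longrightarrow> count_list (concat (map (\<lambda>u. replicate (c u) u) xs)) v = (if v \<in> set xs then c v else 0)"
proof (induction xs)
  case Nil then show ?case by simp
next
  case (Cons a xs)
  have r: "count_list (replicate n a) v = (if a = v then n else 0)" for n
    by (induction n) auto
  show ?case using Cons by (auto simp: r)
qed

lemma list_of_count: "\<exists>y::'u::finite list. count_list y = c"
proof -
  obtain xs :: "'u list" where xs: "set xs = UNIV" "distinct xs"
    using finite_distinct_list[of "UNIV :: 'u set"] by auto
  show ?thesis
    by (rule exI[of _ "concat (map (\<lambda>u. replicate (c u) u) xs)"])
       (use xs count_concat_rep[of xs c] in auto)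
qed

lemma half_err:
  fixes n p mm Sc Sp Sm H :: real
  assumes a1: "n = p + mm" and a2: "Sc = Sp + Sm" and a3: "mm \<le> p" and a4: "p - mm \<le> H"
    and a5: "\<bar>Sp - Sm\<bar> \<le> H"
    and a6: "0 \<le> Sc" and a7: "Sc \<le> n" and a8: "H \<le> n" and a9: "0 < n" and a10: "0 \<le> H"
  shows "\<bar>Sc/n - Sp/p\<bar> \<le> 2*H/(n+H)"
proof -
  define d where "d = p - mm"
  define D where "D = Sp - Sm"
  define q where "q = Sc / n"
  have p0: "p > 0" using a1 a3 a9 by linarith
  have q01: "0 \<le> q" "q \<le> 1" using a6 a7 a9 by (auto simp: q_def divide_simps)
  have d0: "0 \<le> d" "d \<le> H" using a3 a4 d_def by auto
  have np: "n + d = 2 * p" using a1 d_def by simp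
  have eq: "Sp/p - Sc/n = (D - d*q)/(n+d)"
  proof -
    have 1: "Sp/p - Sc/n = (mm*Sp - p*Sm)/(p*n)" using p0 a9 unfolding a2 a1 by (simp add: field_simps)
    have 2: "(D - d*q)/(n+d) = (n*D - d*Sc)/(2*p*n)" unfolding np q_def using a9 p0 by (simp add: field_simps)
    have 3: "n*D - d*Sc = 2*(mm*Sp - p*Sm)" unfolding a1 a2 d_def D_def by (simp add: algebra_simps)
    show ?thesis unfolding 1 2 3 mult.assoc by (simp only: right_diff_distrib[symmetric] mult_divide_mult_cancel_left_if) simp
  qed
  have "\<bar>D - d*q\<bar> \<le> H + d"
  proof -
    have "\<bar>d*q\<bar> \<le> d" using q01 d0 by (simp add: abs_mult mult_left_le)
    then show ?thesis using a5 D_def by linarith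
  qed
  then have "\<bar>(D - d*q)/(n+d)\<bar> \<le> (H+d)/(n+d)"
  proof -
    assume h: "\<bar>D - d*q\<bar> \<le> H + d"
    have pos: "0 < n + d" using np p0 by linarith
    have "\<bar>(D - d*q)/(n+d)\<bar> = \<bar>D - d*q\<bar>/(n+d)" using pos by (simp add: abs_divide)
    also have "\<dots> \<le> (H+d)/(n+d)" using h pos by (intro divide_right_mono) auto
    finally show ?thesis .
  qed
  also have "(H+d)/(n+d) \<le> 2*H/(n+H)"
  proof -
    have "(H+d)*(n+H) \<le> 2*H*(n+d)"
    proof -
      have "d*(n-H) \<le> H*(n-H)" using d0 a8 by (intro mult_right_mono) auto
      then show ?thesis by (simp add: algebra_simps)
    qed
    moreover have "n + d > 0" "n + H > 0" using np p0 a9 a10 by auto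
    ultimately show ?thesis by (simp add: divide_simps)
  qed
  finally have fin: "\<bar>(D - d*q)/(n+d)\<bar> \<le> 2*H/(n+H)" .
  show ?thesis unfolding abs_minus_commute[of "Sc/n"] eq by (rule fin)
qed


lemma min_le_hdisc:
  fixes Q :: "nat \<Rightarrow> 'u::finite \<Rightarrow> real" and S :: "'u set"
  assumes "real (card S) \<le> w"
  shows "Min ((\<lambda>z. disc_val Q m S z) ` (S \<rightarrow>\<^sub>E {-1, 1})) \<le> hdisc_star Q m w"
  unfolding hdisc_star_def by (rule Max_ge) (use assms in auto)

lemma PiE_fin_ne: "finite (S \<rightarrow>\<^sub>E {-1, 1::real})" "(S \<rightarrow>\<^sub>E {-1, 1::real}) \<noteq> {}"
  for S :: "'u::finite set"
  by (auto intro!: finite_PiE simp: PiE_eq_empty_iff)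

lemma disc_exists:
  fixes Q :: "nat \<Rightarrow> 'u::finite \<Rightarrow> real" and S :: "'u set"
  assumes "real (card S) \<le> w"
  shows "\<exists>z \<in> S \<rightarrow>\<^sub>E {-1, 1}. \<forall>i\<le>m. \<bar>\<Sum>u\<in>S. qstar Q m i u * z u\<bar> \<le> hdisc_star Q m w"
proof -
  obtain z where z: "z \<in> S \<rightarrow>\<^sub>E {-1, 1}"
    "disc_val Q m S z = Min ((\<lambda>z. disc_val Q m S z) ` (S \<rightarrow>\<^sub>E {-1, 1}))"
  proof -
    have "Min ((\<lambda>z. disc_val Q m S z) ` (S \<rightarrow>\<^sub>E {-1, 1})) \<in> (\<lambda>z. disc_val Q m S z) ` (S \<rightarrow>\<^sub>E {-1, 1})"
      using PiE_fin_ne[of S] by (intro Min_in) auto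
    then obtain z where "z \<in> S \<rightarrow>\<^sub>E {-1, 1}" "Min ((\<lambda>z. disc_val Q m S z) ` (S \<rightarrow>\<^sub>E {-1, 1})) = disc_val Q m S z"
      by (rule imageE)
    then show ?thesis using that by simp

  qed
  have b: "\<bar>\<Sum>u\<in>S. qstar Q m i u * z u\<bar> \<le> disc_val Q m S z" if "i \<le> m" for i
    unfolding disc_val_def by (rule Max_ge) (use that in auto)
  have le: "disc_val Q m S z \<le> hdisc_star Q m w" using z(2) min_le_hdisc[OF assms, of Q m] by simp
  have "\<forall>i\<le>m. \<bar>\<Sum>u\<in>S. qstar Q m i u * z u\<bar> \<le> hdisc_star Q m w"
    using b le by (blast intro: order_trans)
  with z(1) show ?thesis by blast
qed

lemma hdisc_ge1:
  fixes Q :: "nat \<Rightarrow> 'u::finite \<Rightarrow> real"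
  assumes "1 \<le> w"
  shows "1 \<le> hdisc_star Q m w"
proof -
  define u0 :: 'u where "u0 = undefined"
  have "1 \<le> Min ((\<lambda>z. disc_val Q m {u0} z) ` ({u0} \<rightarrow>\<^sub>E {-1, 1}))"
  proof (subst Min_ge_iff)
    show "finite ((\<lambda>z. disc_val Q m {u0} z) ` ({u0} \<rightarrow>\<^sub>E {-1, 1}))" using PiE_fin_ne by auto
    show "(\<lambda>z. disc_val Q m {u0} z) ` ({u0} \<rightarrow>\<^sub>E {-1, 1}) \<noteq> {}" using PiE_fin_ne by auto
    show "\<forall>a\<in>(\<lambda>z. disc_val Q m {u0} z) ` ({u0} \<rightarrow>\<^sub>E {-1, 1}). 1 \<le> a"
    proof
      fix a assume "a \<in> (\<lambda>z. disc_val Q m {u0} z) ` ({u0} \<rightarrow>\<^sub>E {-1, 1})"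
      then obtain z where z: "z \<in> {u0} \<rightarrow>\<^sub>E {-1, 1}" "a = disc_val Q m {u0} z" by auto
      have "\<bar>\<Sum>u\<in>{u0}. qstar Q m m u * z u\<bar> \<le> disc_val Q m {u0} z"
        unfolding disc_val_def by (rule Max_ge) auto
      moreover have "\<bar>\<Sum>u\<in>{u0}. qstar Q m m u * z u\<bar> = 1"
        using z(1) by (auto simp: qstar_def PiE_def)
      ultimately show "1 \<le> a" using z by simp
    qed
  qed
  also have "\<dots> \<le> hdisc_star Q m w" by (rule min_le_hdisc) (use assms in auto)
  finally show ?thesis .
qed

lemma cS_bounds:
  assumes "\<forall>u. 0 \<le> q u \<and> q u \<le> 1"
  shows "0 \<le> cS q c" "cS q c \<le> real (csz c)"
proof -
  show "0 \<le> cS q c" unfolding cS_def using assms by (intro sum_nonneg) auto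
  have "cS q c \<le> (\<Sum>u\<in>UNIV. real (c u))" unfolding cS_def
    using assms by (intro sum_mono) (simp add: mult_left_le)
  then show "cS q c \<le> real (csz c)" by (simp add: csz_def)
qed

lemma halving_pick:
  fixes Q :: "nat \<Rightarrow> 'u::finite \<Rightarrow> real"
  assumes split: "\<forall>u. cp u + cm u = c u" and le: "csz cm \<le> csz cp"
    and rowm: "real (csz cp) - real (csz cm) \<le> H"
    and rows: "\<forall>i<m. \<bar>cS (Q i) cp - cS (Q i) cm\<bar> \<le> H"
    and Qb: "\<forall>i<m. \<forall>u. 0 \<le> Q i u \<and> Q i u \<le> 1"
    and pos: "0 < csz c" and Hn: "H \<le> real (csz c)" and H0: "0 \<le> H"
  shows "real (csz c) \<le> 2 * real (csz cp) \<and> 2 * real (csz cp) \<le> real (csz c) + H \<and>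
    (\<forall>i<m. \<bar>cans (Q i) c - cans (Q i) cp\<bar> \<le> 2 * H / (real (csz c) + H))"
proof -
  have szc: "csz c = csz cp + csz cm" unfolding csz_def using split
    by (simp add: sum.distrib[symmetric])
  have Sc: "cS q c = cS q cp + cS q cm" for q unfolding cS_def using split
    by (simp add: sum.distrib[symmetric] algebra_simps flip: split)
  have "\<bar>cans (Q i) c - cans (Q i) cp\<bar> \<le> 2 * H / (real (csz c) + H)" if i: "i < m" for i
    unfolding cans_def
  proof (rule half_err[where mm = "real (csz cm)" and Sm = "cS (Q i) cm"])
    show "real (csz c) = real (csz cp) + real (csz cm)" using szc by simp
    show "cS (Q i) c = cS (Q i) cp + cS (Q i) cm" by (rule Sc)
    show "real (csz cm) \<le> real (csz cp)" using le by simp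
    show "real (csz cp) - real (csz cm) \<le> H" by (rule rowm)
    show "\<bar>cS (Q i) cp - cS (Q i) cm\<bar> \<le> H" using rows i by auto
    show "0 \<le> cS (Q i) c" "cS (Q i) c \<le> real (csz c)" using cS_bounds[of "Q i" c] Qb i by auto
  qed (use pos Hn H0 in auto)
  moreover have "real (csz c) \<le> 2 * real (csz cp)" using szc le by simp
  moreover have "2 * real (csz cp) \<le> real (csz c) + H" using szc rowm by simp
  ultimately show ?thesis by blast
qed

lemma halving:
  fixes Q :: "nat \<Rightarrow> 'u::finite \<Rightarrow> real"
  assumes Qb: "\<forall>i<m. \<forall>u. 0 \<le> Q i u \<and> Q i u \<le> 1"
    and pos: "0 < csz c" and cw: "real (csz c) \<le> w" and Hn: "hdisc_star Q m w \<le> real (csz c)"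
  shows "\<exists>c'. real (csz c) \<le> 2 * real (csz c') \<and> 2 * real (csz c') \<le> real (csz c) + hdisc_star Q m w \<and>
    (\<forall>i<m. \<bar>cans (Q i) c - cans (Q i) c'\<bar> \<le> 2 * hdisc_star Q m w / (real (csz c) + hdisc_star Q m w))"
proof -
  define H where "H = hdisc_star Q m w"
  define S where "S = {u. odd (c u)}"
  have "card S = (\<Sum>u\<in>S. 1)" by simp
  also have "\<dots> \<le> (\<Sum>u\<in>S. c u)" unfolding S_def by (intro sum_mono) (simp add: Suc_leI odd_pos)
  also have "\<dots> \<le> csz c" unfolding csz_def by (intro sum_mono2) auto
  finally have "real (card S) \<le> w" using cw by linarith
  from disc_exists[OF this, where Q = Q and m = m] obtain z where z: "z \<in> S \<rightarrow>\<^sub>E {-1, 1}"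
    "\<forall>i\<le>m. \<bar>\<Sum>u\<in>S. qstar Q m i u * z u\<bar> \<le> H" unfolding H_def by blast
  have H0: "0 \<le> H" using z(2) by force
  define cp where "cp u = c u div 2 + (if u \<in> S \<and> z u = 1 then 1 else 0)" for u
  define cm where "cm u = c u div 2 + (if u \<in> S \<and> z u = -1 then 1 else 0)" for u
  have zS: "u \<in> S \<Longrightarrow> z u = 1 \<or> z u = -1" for u using z(1) by (auto simp: PiE_def)
  have split: "\<forall>u. cp u + cm u = c u"
  proof
    fix u show "cp u + cm u = c u"
    proof (cases "u \<in> S")
      case True then show ?thesis using zS[OF True] unfolding cp_def cm_def S_def
        by (auto elim!: oddE)
    next
      case False then show ?thesis unfolding cp_def cm_def S_def by auto
    qed
  qed
  have dif: "real (cp u) - real (cm u) = (if u \<in> S then z u else 0)" for u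
    using zS[of u] unfolding cp_def cm_def by auto
  have key: "(\<Sum>u\<in>UNIV. real (cp u) * r u) - (\<Sum>u\<in>UNIV. real (cm u) * r u) = (\<Sum>u\<in>S. r u * z u)" for r
  proof -
    have "(\<Sum>u\<in>UNIV. real (cp u) * r u) - (\<Sum>u\<in>UNIV. real (cm u) * r u)
        = (\<Sum>u\<in>UNIV. (real (cp u) - real (cm u)) * r u)"
      by (simp add: sum_subtractf left_diff_distrib)
    also have "\<dots> = (\<Sum>u\<in>UNIV. if u \<in> S then r u * z u else 0)"
      by (intro sum.cong) (auto simp: dif)
    also have "\<dots> = (\<Sum>u\<in>S. r u * z u)"
      by (simp add: sum.If_cases)
    finally show ?thesis .
  qed
  have rows0: "\<bar>cS (Q i) cp - cS (Q i) cm\<bar> \<le> H" if "i < m" for i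
  proof -
    have "cS (Q i) cp - cS (Q i) cm = (\<Sum>u\<in>S. qstar Q m i u * z u)"
      unfolding cS_def key using that by (simp add: qstar_def)
    then show ?thesis using z(2) that by auto
  qed
  have rows: "\<forall>i<m. \<bar>cS (Q i) cp - cS (Q i) cm\<bar> \<le> H" using rows0 by blast
  have rowm: "\<bar>real (csz cp) - real (csz cm)\<bar> \<le> H"
  proof -
    have "real (csz cp) - real (csz cm) = (\<Sum>u\<in>S. qstar Q m m u * z u)"
      using key[of "\<lambda>_. 1"] unfolding csz_def by (simp add: qstar_def)
    then show ?thesis using z(2) by auto
  qed
  show ?thesis
  proof (cases "csz cm \<le> csz cp")
    case True
    have "real (csz cp) - real (csz cm) \<le> H" using rowm by auto
    from halving_pick[OF split True this rows Qb pos Hn[folded H_def] H0] show ?thesis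
      unfolding H_def by blast
  next
    case False
    have split': "\<forall>u. cm u + cp u = c u" using split by (simp add: add.commute)
    have "real (csz cm) - real (csz cp) \<le> H" using rowm by auto
    moreover have "\<forall>i<m. \<bar>cS (Q i) cm - cS (Q i) cp\<bar> \<le> H" using rows by (simp add: abs_minus_commute)
    ultimately have "?thesis" using halving_pick[OF split' _ _ _ Qb pos Hn[folded H_def] H0] False
      unfolding H_def by (metis nat_le_linear)
    then show ?thesis .
  qed
qed



lemma sample_one:
  fixes q :: "'u \<Rightarrow> real" and A :: "'u set" and k :: nat and d :: 'u
  assumes qb: "\<forall>u. 0 \<le> q u \<and> q u \<le> 1" and finA: "finite A" and neA: "A \<noteq> {}" and k: "k > 0"
    and eps: "\<epsilon> \<ge> 0"
  shows "measure_pmf.prob (Pi_pmf {..<k} d (\<lambda>_. pmf_of_set A))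
           {f. \<bar>(\<Sum>j<k. q (f j)) / real k - (\<Sum>u\<in>A. q u) / real (card A)\<bar> \<ge> \<epsilon>}
         \<le> 2 * exp (-2 * real k * \<epsilon>\<^sup>2)"
proof -
  define PP where "PP = Pi_pmf {..<k} d (\<lambda>_. pmf_of_set A)"
  have comp: "map_pmf (\<lambda>f. f j) PP = pmf_of_set A" if "j < k" for j
    unfolding PP_def using that by (subst Pi_pmf_component) auto
  have distr_eq: "distr (measure_pmf PP) borel (\<lambda>f. q (f j)) = distr (measure_pmf (pmf_of_set A)) borel q"
    if "j < k" for j
  proof -
    have "distr (measure_pmf PP) borel (\<lambda>f. q (f j)) =
          distr (measure_pmf (map_pmf (\<lambda>f. f j) PP)) borel q"
      unfolding map_pmf_rep_eq by (subst distr_distr) (auto simp: o_def)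
    then show ?thesis using comp[OF that] by simp
  qed
  have mu: "(\<Sum>u\<in>A. q u) / real (card A) \<equiv> measure_pmf.expectation PP (\<lambda>f. q (f 0))"
  proof -
    have "measure_pmf.expectation PP (\<lambda>f. q (f 0)) =
          measure_pmf.expectation (map_pmf (\<lambda>f. f 0) PP) q" by simp
    also have "\<dots> = measure_pmf.expectation (pmf_of_set A) q" using comp[of 0] k by simp
    also have "\<dots> = (\<Sum>u\<in>A. q u) / real (card A)" using finA neA by (simp add: integral_pmf_of_set)
    finally show "(\<Sum>u\<in>A. q u) / real (card A) \<equiv> measure_pmf.expectation PP (\<lambda>f. q (f 0))" by simp
  qed
  interpret H: Hoeffding_ineq_iid "measure_pmf PP" "{..<k}" "\<lambda>j f. q (f j)" "\<lambda>f. q (f 0)" 0 1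
    "(\<Sum>u\<in>A. q u) / real (card A)"
  proof unfold_locales
    show "prob_space.indep_vars (measure_pmf PP) (\<lambda>_. borel) (\<lambda>j f. q (f j)) {..<k}"
      unfolding PP_def
      by (intro prob_space.indep_vars_compose2[OF _ indep_vars_Pi_pmf])
         (auto simp: measure_pmf.prob_space_axioms)
    show "distr (measure_pmf PP) borel (\<lambda>f. q (f j)) = distr (measure_pmf PP) borel (\<lambda>f. q (f 0))"
      if "j \<in> {..<k}" for j using distr_eq[of j] distr_eq[of 0] that k by simp
    show "(\<Sum>u\<in>A. q u) / real (card A) \<equiv> measure_pmf.expectation PP (\<lambda>f. q (f 0))" by (rule mu)
  qed (use qb in auto)
  have "{..<k} \<noteq> {}" using k by auto
  from H.Hoeffding_ineq_abs_ge'[OF eps _ this] show ?thesis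
    by (simp add: PP_def)
qed


lemma arithA:
  fixes H L \<alpha> :: real
  assumes H: "1 \<le> H" and a0: "0 < \<alpha>" and a1: "\<alpha> < 1" and L: "5 / \<alpha> * H < L"
  shows "2*H/(L+H) + 2*H/(L-H) \<le> 5*\<alpha>/6"
proof -
  have "\<alpha>*(5 / \<alpha> * H) < \<alpha>*L" by (rule mult_strict_left_mono[OF L a0])
  moreover have "\<alpha>*(5 / \<alpha> * H) = 5*H" using a0 by simp
  ultimately have aL: "5*H < \<alpha>*L" by simp
  have "5 \<le> 5 / \<alpha>" using a0 a1 by (simp add: le_divide_eq)
  then have "5*H \<le> 5 / \<alpha> * H" using H by (intro mult_right_mono) auto
  then have L5: "5*H < L" using L by linarith
  have LH: "H < L" using L5 H by linarith
  have Lp: "0 < L - H" "0 < L + H" using LH H by auto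
  have eq: "2*H/(L+H) + 2*H/(L-H) = 4*H*L/((L+H)*(L-H))"
    using Lp by (simp add: field_simps)
  have "24*H*L \<le> 5*\<alpha>*((L+H)*(L-H))"
  proof -
    have 1: "(5*H)*L \<le> (\<alpha>*L)*L" using aL LH H by (intro mult_right_mono) auto
    have "\<alpha>*(H*H) \<le> 1*(H*H)" using a1 by (intro mult_right_mono) auto
    moreover have "H*(5*H) \<le> H*L" using L5 H by (intro mult_left_mono) auto
    ultimately have 2: "5*(\<alpha>*(H*H)) \<le> H*L" by simp
    have 3: "5*\<alpha>*((L+H)*(L-H)) = 5*((\<alpha>*L)*L) - 5*(\<alpha>*(H*H))" by (simp add: algebra_simps)
    have 4: "(5*H)*L = 5*(H*L)" "24*H*L = 24*(H*L)" by simp_all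
    show ?thesis unfolding 3 4(2) using 1 2 4(1) by linarith
  qed
  then have "4*H*L/((L+H)*(L-H)) \<le> 5*\<alpha>/6"
    using Lp by (simp add: divide_simps)
  then show ?thesis using eq by simp
qed

lemma arithB:
  fixes H L L' :: real
  assumes H: "0 \<le> H" and LH: "H < L" and L'H: "H < L'" and half: "2*(L'-H) \<le> L-H"
  shows "2*H/(L+H) + 2*H/(L-H) \<le> 2*H/(L'-H)"
proof -
  have "2*H/(L+H) \<le> 2*H/(L-H)" using H LH by (intro divide_left_mono) auto
  moreover have "4*H/(L-H) \<le> 2*H/(L'-H)"
  proof -
    have "4*H/(L-H) = 2*H/((L-H)/2)" by simp
    also have "\<dots> \<le> 2*H/(L'-H)" using H L'H half by (intro divide_left_mono) auto
    finally show ?thesis .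
  qed
  ultimately show ?thesis by simp
qed

lemma reduce:
  fixes Q :: "nat \<Rightarrow> 'u::finite \<Rightarrow> real" and \<alpha> w :: real
  assumes Qb: "\<forall>i<m. \<forall>u. 0 \<le> Q i u \<and> Q i u \<le> 1" and a0: "0 < \<alpha>" and a1: "\<alpha> < 1"
    and H1: "1 \<le> hdisc_star Q m w"
  shows "0 < csz c \<Longrightarrow> real (csz c) \<le> w \<Longrightarrow> \<exists>c'. 0 < csz c' \<and> real (csz c') \<le> 5 / \<alpha> * hdisc_star Q m w \<and>
    (\<forall>i<m. \<bar>cans (Q i) c - cans (Q i) c'\<bar> \<le>
       (if real (csz c) \<le> 5 / \<alpha> * hdisc_star Q m w then 0
        else 5*\<alpha>/6 - 2*hdisc_star Q m w / (real (csz c) - hdisc_star Q m w)))"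
proof (induction "csz c" arbitrary: c rule: less_induct)
  case less
  define H where "H = hdisc_star Q m w"
  define s where "s = 5 / \<alpha> * H"
  show ?case
  proof (cases "real (csz c) \<le> s")
    case True
    then show ?thesis using less.prems unfolding s_def H_def by (intro exI[of _ c]) auto
  next
    case False
    then have Ls: "s < real (csz c)" by simp
    have sH: "5 * H \<le> s" unfolding s_def using a0 a1 H1 H_def by (simp add: field_simps)
    have LH: "H < real (csz c)" using Ls sH H1 H_def by simp
    obtain c' where c': "real (csz c) \<le> 2 * real (csz c')" "2 * real (csz c') \<le> real (csz c) + H"
      "\<forall>i<m. \<bar>cans (Q i) c - cans (Q i) c'\<bar> \<le> 2 * H / (real (csz c) + H)"
      using halving[OF Qb less.prems(1) less.prems(2)] LH unfolding H_def by force
    have c'pos: "0 < csz c'" using c'(1) less.prems(1) by simp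
    have c'lt: "csz c' < csz c" using c'(2) LH by simp
    have c'w: "real (csz c') \<le> w" using c'lt less.prems(2) by simp
    obtain c'' where c'': "0 < csz c''" "real (csz c'') \<le> s"
      "\<forall>i<m. \<bar>cans (Q i) c' - cans (Q i) c''\<bar> \<le>
       (if real (csz c') \<le> s then 0 else 5*\<alpha>/6 - 2*H / (real (csz c') - H))"
      using less.hyps[OF c'lt c'pos c'w] unfolding s_def H_def by blast
    have err: "\<bar>cans (Q i) c - cans (Q i) c''\<bar> \<le> 5*\<alpha>/6 - 2*H / (real (csz c) - H)"
      if i: "i < m" for i
    proof -
      have tri: "\<bar>cans (Q i) c - cans (Q i) c''\<bar> \<le> \<bar>cans (Q i) c - cans (Q i) c'\<bar> + \<bar>cans (Q i) c' - cans (Q i) c''\<bar>"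
        using abs_triangle_ineq[of "cans (Q i) c - cans (Q i) c'" "cans (Q i) c' - cans (Q i) c''"] by simp
      have A: "2*H/(real (csz c)+H) + 2*H/(real (csz c)-H) \<le> 5*\<alpha>/6"
        using arithA[OF H1[folded H_def] a0 a1] Ls unfolding s_def by blast
      show ?thesis
      proof (cases "real (csz c') \<le> s")
        case True
        then show ?thesis using tri c'(3) c''(3) i A by fastforce
      next
        case False
        have B: "2*H/(real (csz c)+H) + 2*H/(real (csz c)-H) \<le> 2*H/(real (csz c')-H)"
          using arithB[of H "real (csz c)" "real (csz c')"] H1 H_def LH False sH c'(2) by simp
        show ?thesis using tri c'(3) c''(3) i B False by fastforce
      qed
    qed
    show ?thesis using c'' err False unfolding s_def H_def by (intro exI[of _ c'']) auto
  qed
qed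

lemma sampling:
  fixes Q :: "nat \<Rightarrow> 'u \<Rightarrow> real" and x :: "'u list" and k :: nat
  assumes Qb: "\<forall>i<m. \<forall>u. 0 \<le> Q i u \<and> Q i u \<le> 1" and dx: "distinct x" and nx: "x \<noteq> []"
    and k: "k > 0" and eps: "\<epsilon> \<ge> 0" and small: "2 * real m * exp (-2 * real k * \<epsilon>\<^sup>2) < 1"
  shows "\<exists>y::'u list. length y = k \<and> (\<forall>i<m. \<bar>query_answer (Q i) x - query_answer (Q i) y\<bar> < \<epsilon>)"
proof -
  define PP where "PP = Pi_pmf {..<k} (hd x) (\<lambda>_. pmf_of_set (set x))"
  define B where "B i = {f. \<bar>(\<Sum>j<k. Q i (f j)) / real k - (\<Sum>u\<in>set x. Q i u) / real (card (set x))\<bar> \<ge> \<epsilon>}" for i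
  have qa: "query_answer (Q i) x = (\<Sum>u\<in>set x. Q i u) / real (card (set x))" for i
    unfolding query_answer_def using dx by (simp add: sum_list_distinct_conv_sum_set distinct_card)
  have pB: "measure_pmf.prob PP (B i) \<le> 2 * exp (-2 * real k * \<epsilon>\<^sup>2)" if "i < m" for i
    unfolding PP_def B_def by (rule sample_one) (use Qb that nx k eps in auto)
  have "measure_pmf.prob PP (\<Union>i\<in>{..<m}. B i) \<le> (\<Sum>i\<in>{..<m}. measure_pmf.prob PP (B i))"
    by (rule measure_pmf.finite_measure_subadditive_finite) auto
  also have "\<dots> \<le> (\<Sum>i\<in>{..<m}. 2 * exp (-2 * real k * \<epsilon>\<^sup>2))" by (intro sum_mono pB) auto
  also have "\<dots> < 1" using small by simp
  finally have "(\<Union>i\<in>{..<m}. B i) \<noteq> UNIV" by auto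
  then obtain f where f: "\<forall>i<m. f \<notin> B i" by blast
  define y where "y = map f [0..<k]"
  have "query_answer (Q i) y = (\<Sum>j<k. Q i (f j)) / real k" for i
    unfolding query_answer_def y_def by (simp add: interv_sum_list_conv_sum_set_nat atLeast0LessThan o_def)
  then show ?thesis using f unfolding B_def qa
    by (intro exI[of _ y]) (auto simp: y_def abs_minus_commute)
qed


theorem corollary6p9:
  fixes \<alpha> :: real and m :: nat and Q :: "nat \<Rightarrow> 'u::finite \<Rightarrow> real"
  assumes "0 < \<alpha>" and "\<alpha> < 1"
    and "m \<ge> 2"
    and "\<forall>i<m. \<forall>u. 0 \<le> Q i u \<and> Q i u \<le> 1"
  shows "\<forall>x::'u list. distinct x \<and> x \<noteq> [] \<longrightarrow>
           (\<exists>y::'u list. y \<noteq> [] \<and>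
              real (length y) \<le> 5 / \<alpha> * hdisc_star Q m (32 * ln (real m) / \<alpha>^2) \<and>
              (\<forall>i<m. \<bar>query_answer (Q i) x - query_answer (Q i) y\<bar> \<le> 9/8 * \<alpha>))"
proof (intro allI impI)
  note a0 = assms(1) and a1 = assms(2) and m2 = assms(3) and Qb = assms(4)
  fix x :: "'u list" assume hx: "distinct x \<and> x \<noteq> []"
  define w where "w = 32 * ln (real m) / \<alpha>^2"
  define H where "H = hdisc_star Q m w"
  have ln2: "1/2 \<le> ln (2::real)" using ln_add1_ge[of "1::real"] by simp
  have lnm: "ln 2 \<le> ln (real m)" using m2 by (intro ln_mono) auto
  have sq: "0 < \<alpha>^2" "\<alpha>^2 < 1" using a0 a1 by (auto simp: power_less_one_iff)
  have wa: "w * \<alpha>^2 = 32 * ln (real m)" unfolding w_def using sq by simp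
  have w1: "1 \<le> w"
  proof -
    have "1 * \<alpha>^2 \<le> w * \<alpha>^2" unfolding wa using sq ln2 lnm by simp
    then show ?thesis using sq by (simp add: mult_le_cancel_right)
  qed
  have H1: "1 \<le> H" unfolding H_def by (rule hdisc_ge1[OF w1])
  have "\<exists>c0. 0 < csz c0 \<and> real (csz c0) \<le> w \<and> (\<forall>i<m. \<bar>query_answer (Q i) x - cans (Q i) c0\<bar> \<le> \<alpha>/4)"
  proof (cases "real (length x) \<le> w")
    case True
    show ?thesis
      by (rule exI[of _ "count_list x"]) (use True hx a0 in \<open>auto simp: qa_count length_count[symmetric]\<close>)
  next
    case False
    define k where "k = nat \<lfloor>w\<rfloor>"
    have kw: "real k \<le> w" "w - 1 < real k" unfolding k_def using w1 by linarith+
    have k0: "k > 0" using kw w1 by linarith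
    have small: "2 * real m * exp (-2 * real k * (\<alpha>/4)\<^sup>2) < 1"
    proof -
      have "(w - 1) * \<alpha>^2 < real k * \<alpha>^2" using kw sq by (intro mult_strict_right_mono) auto
      then have kal: "32 * ln (real m) - 1 < real k * \<alpha>^2" using wa sq by (simp add: algebra_simps)
      have e1: "-2 * real k * (\<alpha>/4)\<^sup>2 = - (real k * \<alpha>^2) / 8" by (simp add: power_divide)
      have "-2 * real k * (\<alpha>/4)\<^sup>2 \<le> 1/8 - 4 * ln (real m)" unfolding e1 using kal by linarith
      then have "exp (-2 * real k * (\<alpha>/4)\<^sup>2) \<le> exp (1/8 - 4 * ln (real m))" by simp
      also have "exp (1/8 - 4 * ln (real m)) = exp (1/8) / real m ^ 4"
      proof -
        have "exp (4 * ln (real m)) = exp (ln (real m)) ^ 4"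
          using exp_of_nat_mult[of 4 "ln (real m)"] by simp
        also have "\<dots> = real m ^ 4" using m2 by simp
        finally show ?thesis by (simp add: exp_diff)
      qed
      finally have b: "exp (-2 * real k * (\<alpha>/4)\<^sup>2) \<le> exp (1/8) / real m ^ 4" .
      have mpos: "0 < real m" using m2 by simp
      have "exp (1/8::real) \<le> exp 1" by simp
      then have e3: "exp (1/8::real) \<le> 3" using exp_le by linarith
      have "(2::real)^3 \<le> real m ^ 3" using m2 by (intro power_mono) auto
      then have m3: "2 * exp (1/8) < real m ^ 3" using e3 by simp
      have "2 * real m * exp (1/8) = 2 * exp (1/8) * real m" by (simp add: mult_ac)
      also have "\<dots> < real m ^ 3 * real m" using m3 mpos by (intro mult_strict_right_mono) auto
      also have "\<dots> = real m ^ 4" using power_add[of "real m" 3 1] by simp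
      finally have m4: "2 * real m * exp (1/8) < real m ^ 4" .
      have "2 * real m * exp (-2 * real k * (\<alpha>/4)\<^sup>2) \<le> 2 * real m * (exp (1/8) / real m ^ 4)"
        using b mpos by (intro mult_left_mono) auto
      also have "\<dots> = (2 * real m * exp (1/8)) / real m ^ 4" by simp
      also have "\<dots> < 1" using m4 mpos by simp
      finally show ?thesis .
    qed
    obtain y0 :: "'u list" where y0: "length y0 = k"
      "\<forall>i<m. \<bar>query_answer (Q i) x - query_answer (Q i) y0\<bar> < \<alpha>/4"
      using sampling[OF Qb _ _ k0 _ small] hx a0 by auto
    show ?thesis
      by (rule exI[of _ "count_list y0"]) (use y0 k0 kw in \<open>auto simp: qa_count length_count[symmetric] less_imp_le\<close>)
  qed
  then obtain c0 where c0: "0 < csz c0" "real (csz c0) \<le> w"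
    "\<forall>i<m. \<bar>query_answer (Q i) x - cans (Q i) c0\<bar> \<le> \<alpha>/4" by blast
  obtain c' where c': "0 < csz c'" "real (csz c') \<le> 5 / \<alpha> * H"
    "\<forall>i<m. \<bar>cans (Q i) c0 - cans (Q i) c'\<bar> \<le>
       (if real (csz c0) \<le> 5 / \<alpha> * H then 0 else 5*\<alpha>/6 - 2*H / (real (csz c0) - H))"
    using reduce[OF Qb a0 a1 H1[unfolded H_def] c0(1) c0(2)] unfolding H_def by blast
  have Ebound: "(if real (csz c0) \<le> 5 / \<alpha> * H then 0 else 5*\<alpha>/6 - 2*H / (real (csz c0) - H)) \<le> 5*\<alpha>/6"
  proof (cases "real (csz c0) \<le> 5 / \<alpha> * H")
    case True then show ?thesis using a0 by simp
  next
    case False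
    have "1 \<le> 5 / \<alpha>" using a0 a1 by (simp add: le_divide_eq)
    then have "H \<le> 5 / \<alpha> * H" using H1 by (metis mult_right_mono mult_1 order_trans zero_le_one)
    then have "0 \<le> 2*H / (real (csz c0) - H)" using False H1 by (intro divide_nonneg_nonneg) auto
    then show ?thesis using False by simp
  qed
  obtain y :: "'u list" where y: "count_list y = c'" using list_of_count by blast
  have ly: "length y = csz c'" using y length_count by metis
  show "\<exists>y::'u list. y \<noteq> [] \<and>
              real (length y) \<le> 5 / \<alpha> * hdisc_star Q m (32 * ln (real m) / \<alpha>^2) \<and>
              (\<forall>i<m. \<bar>query_answer (Q i) x - query_answer (Q i) y\<bar> \<le> 9/8 * \<alpha>)"
  proof (intro exI[of _ y] conjI allI impI)
    show "y \<noteq> []" using ly c'(1) by auto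
    show "real (length y) \<le> 5 / \<alpha> * hdisc_star Q m (32 * ln (real m) / \<alpha>^2)"
      using ly c'(2) unfolding H_def w_def by simp
    fix i assume i: "i < m"
    have "\<bar>query_answer (Q i) x - query_answer (Q i) y\<bar> \<le>
          \<bar>query_answer (Q i) x - cans (Q i) c0\<bar> + \<bar>cans (Q i) c0 - cans (Q i) c'\<bar>"
      using abs_triangle_ineq[of "query_answer (Q i) x - cans (Q i) c0" "cans (Q i) c0 - cans (Q i) c'"]
      by (simp add: qa_count y)
    also have "\<dots> \<le> \<alpha>/4 + 5*\<alpha>/6" using c0(3) c'(3) Ebound i by (meson add_mono order_trans)
    also have "\<dots> \<le> 9/8 * \<alpha>" using a0 by simp
    finally show "\<bar>query_answer (Q i) x - query_answer (Q i) y\<bar> \<le> 9/8 * \<alpha>" .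
  qed
qed

end
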